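(* Let $I=(\mathcal{M},[N],(u_i)_{i\in[N]})$ be a non-negative instance with $\mathcal{M}\neq\emptyset$ and let $(S_1,\ldots,S_N)$ be the allocation produced by the round-robin greedy protocol for $I$. Then for every agent $i\in[N]$, $$u_i(S_i)\le \frac{1}{N}u_i(\mathcal{M})+\Big(1-\frac1N\Big)u^i_{\max},$$ where $u^i_{\max}:=\max_{j\in\mathcal{M}}u_i(j)$.
   Context: A non-negative instance: finite item set $\mathcal{M}$, agents $[N]=\{1,\dots,N\}$, additive utilities $u_i$ with $u_i(j)\ge 0$. The round-robin greedy protocol: agents pick in the fixed order $1,2,\dots,N,1,2,\dots,N,\dots$; at her turn agent $i$ receives an item of lowest utility $u_i$ among the unallocated items (ties broken arbitrarily), until all items are allocated; $S_i$ is the set agent $i$ receives. *)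

theory Defs
  imports Complex_Main
begin

text \<open>In a run of the round-robin greedy protocol, the k-th pick
(k = 0,1,...) is made by agent (k mod N) + 1. A run is recorded as the list of
picked items in order. Arbitrary tie-breaking: any list satisfying the greedy
condition at every step is a valid run.\<close>

definition rr_agent :: "nat \<Rightarrow> nat \<Rightarrow> nat" where
  "rr_agent N k = k mod N + 1"

definition rr_greedy_run :: "nat \<Rightarrow> (nat \<Rightarrow> 'a \<Rightarrow> real) \<Rightarrow> 'a set \<Rightarrow> 'a list \<Rightarrow> bool" where
  "rr_greedy_run N u M picks \<longleftrightarrow>
     distinct picks \<and> set picks = M \<and>
     (\<forall>k < length picks. \<forall>j \<in> M - set (take k picks).
        u (rr_agent N k) (picks ! k) \<le> u (rr_agent N k) j)"

definition rr_bundle :: "nat \<Rightarrow> 'a list \<Rightarrow> nat \<Rightarrow> 'a set" where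
  "rr_bundle N picks i = {picks ! k | k. k < length picks \<and> rr_agent N k = i}"

end

theory Submission
  imports Defs
begin

lemma modeq_close:
  fixes k s N :: nat
  assumes "k mod N = s mod N" "s \<le> k" "k < s + N"
  shows "k = s"
proof -
  have "N dvd (k - s)" using assms(1,2) by (simp add: mod_eq_dvd_iff_nat)
  moreover have "k - s < N" using assms by linarith
  ultimately have "k - s = 0" using dvd_imp_le by (metis neq0_conv not_le)
  thus ?thesis using assms(2) by simp
qed

lemma key:
  fixes f :: "nat \<Rightarrow> real" and N L r :: nat
  assumes N: "N \<ge> 1" and nn: "\<And>m. m < L \<Longrightarrow> 0 \<le> f m"
    and mx: "\<And>m. m < L \<Longrightarrow> f m \<le> Mx" and mx0: "0 \<le> Mx"
    and mono: "\<And>k m. k \<le> m \<Longrightarrow> m < L \<Longrightarrow> k mod N = r \<Longrightarrow> f k \<le> f m"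
  shows "s mod N = r \<Longrightarrow> real N * (\<Sum>k\<in>{k. s \<le> k \<and> k < L \<and> k mod N = r}. f k)
          \<le> (\<Sum>m\<in>{s..<L}. f m) + (real N - 1) * Mx"
proof (induction "L - s" arbitrary: s rule: less_induct)
  case less
  show ?case
  proof (cases "s < L")
    case False
    then have e: "{k. s \<le> k \<and> k < L \<and> k mod N = r} = {}" by auto
    have "(real N - 1) * Mx \<ge> 0" using N mx0 by simp
    then show ?thesis unfolding e using False by simp
  next
    case sL: True
    show ?thesis
    proof (cases "L \<le> s + N")
      case True
      have "{k. s \<le> k \<and> k < L \<and> k mod N = r} = {s}"
        using True sL less.prems modeq_close[of _ N s] by fastforce
      hence "real N * (\<Sum>k\<in>{k. s \<le> k \<and> k < L \<and> k mod N = r}. f k) = f s + (real N - 1) * f s"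
        by (simp add: algebra_simps)
      also have "\<dots> \<le> (\<Sum>m\<in>{s..<L}. f m) + (real N - 1) * Mx"
      proof -
        have "f s \<le> (\<Sum>m\<in>{s..<L}. f m)"
          using sL nn by (intro member_le_sum) auto
        moreover have "(real N - 1) * f s \<le> (real N - 1) * Mx"
          using mx[OF sL] N by (intro mult_left_mono) auto
        ultimately show ?thesis by linarith
      qed
      finally show ?thesis .
    next
      case False
      have set: "{k. s \<le> k \<and> k < L \<and> k mod N = r} = insert s {k. s + N \<le> k \<and> k < L \<and> k mod N = r}"
      proof (rule set_eqI, rule iffI)
        fix k assume k: "k \<in> {k. s \<le> k \<and> k < L \<and> k mod N = r}"
        show "k \<in> insert s {k. s + N \<le> k \<and> k < L \<and> k mod N = r}"
        proof (cases "k < s + N")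
          case True thus ?thesis using k less.prems modeq_close[of k N s] by auto
        qed (use k in auto)
      qed (use sL less.prems in auto)
      have nm: "s \<notin> {k. s + N \<le> k \<and> k < L \<and> k mod N = r}" using N by auto
      have IH: "real N * (\<Sum>k\<in>{k. s + N \<le> k \<and> k < L \<and> k mod N = r}. f k)
          \<le> (\<Sum>m\<in>{s+N..<L}. f m) + (real N - 1) * Mx"
        using less.hyps[of "s+N"] less.prems N sL by auto
      have blk: "real N * f s \<le> (\<Sum>m\<in>{s..<s+N}. f m)"
        using sum_bounded_below[of "{s..<s+N}" "f s" f] mono[of s] less.prems False by auto
      have split: "(\<Sum>m\<in>{s..<L}. f m) = (\<Sum>m\<in>{s..<s+N}. f m) + (\<Sum>m\<in>{s+N..<L}. f m)"
        using False by (simp add: sum.atLeastLessThan_concat)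
      show ?thesis unfolding set using nm IH blk split
        by (simp add: distrib_left)
    qed
  qed
qed

theorem lemma3:
  fixes N :: nat and M :: "'a set" and u :: "nat \<Rightarrow> 'a \<Rightarrow> real" and picks :: "'a list"
  assumes "N \<ge> 1"
    and "finite M" and "M \<noteq> {}"
    and "\<And>i j. i \<in> {1..N} \<Longrightarrow> j \<in> M \<Longrightarrow> u i j \<ge> 0"
    and "rr_greedy_run N u M picks"
    and "i \<in> {1..N}"
  shows "(\<Sum>j\<in>rr_bundle N picks i. u i j)
         \<le> (1 / real N) * (\<Sum>j\<in>M. u i j) + (1 - 1 / real N) * Max (u i ` M)"
proof -
  define L where "L = length picks"
  define r where "r = i - 1"
  define f where "f k = u i (picks ! k)" for k
  define Mx where "Mx = Max (u i ` M)"
  have d: "distinct picks" and sM: "set picks = M"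
    and gr: "\<And>k j. k < L \<Longrightarrow> j \<in> M - set (take k picks) \<Longrightarrow>
        u (rr_agent N k) (picks ! k) \<le> u (rr_agent N k) j"
    using assms(5) unfolding rr_greedy_run_def L_def by auto
  have r: "r < N" "i = r + 1" using assms(6) unfolding r_def by auto
  have inM: "\<And>m. m < L \<Longrightarrow> picks ! m \<in> M" using sM L_def by auto
  have nn: "\<And>m. m < L \<Longrightarrow> 0 \<le> f m" using inM assms(4,6) f_def by auto
  have mx: "\<And>m. m < L \<Longrightarrow> f m \<le> Mx" unfolding f_def Mx_def
    using inM assms(2) by auto
  obtain j0 where "j0 \<in> M" using assms(3) by auto
  hence mx0: "0 \<le> Mx" unfolding Mx_def using assms(2,4,6)
    by (meson Max_ge finite_imageI image_eqI order_trans)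
  have mono: "f k \<le> f m" if "k \<le> m" "m < L" "k mod N = r" for k m
  proof -
    have ag: "rr_agent N k = i" using that r unfolding rr_agent_def by simp
    have "picks ! m \<notin> set (take k picks)"
    proof
      assume "picks ! m \<in> set (take k picks)"
      then obtain j where j: "j < length (take k picks)" "take k picks ! j = picks ! m"
        by (auto simp: in_set_conv_nth)
      hence "picks ! j = picks ! m" "j < k" "j < L" using L_def by auto
      hence "j = m" using d that L_def nth_eq_iff_index_eq by fastforce
      thus False using \<open>j < k\<close> that by simp
    qed
    hence "u (rr_agent N k) (picks ! k) \<le> u (rr_agent N k) (picks ! m)"
      using gr[of k "picks ! m"] that inM by auto
    thus ?thesis using ag f_def by simp
  qed
  have K: "real N * (\<Sum>k\<in>{k. r \<le> k \<and> k < L \<and> k mod N = r}. f k)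
          \<le> (\<Sum>m\<in>{r..<L}. f m) + (real N - 1) * Mx"
  proof (rule key[where f=f and L=L and Mx=Mx and r=r])
    show "\<And>k m. k \<le> m \<Longrightarrow> m < L \<Longrightarrow> k mod N = r \<Longrightarrow> f k \<le> f m" by (rule mono)
  qed (use assms(1) nn mx mx0 r in auto)
  have P: "{k. r \<le> k \<and> k < L \<and> k mod N = r} = {k. k < L \<and> rr_agent N k = i}"
    using r unfolding rr_agent_def by (auto intro: order_trans[OF _ mod_less_eq_dividend])
  have bund: "rr_bundle N picks i = (\<lambda>k. picks ! k) ` {k. k < L \<and> rr_agent N k = i}"
    unfolding rr_bundle_def L_def by auto
  have inj: "inj_on (\<lambda>k. picks ! k) {..<L}"
    using d unfolding L_def by (simp add: inj_on_def nth_eq_iff_index_eq)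
  have S: "(\<Sum>j\<in>rr_bundle N picks i. u i j) = (\<Sum>k\<in>{k. r \<le> k \<and> k < L \<and> k mod N = r}. f k)"
    unfolding bund P f_def by (rule sum.reindex[unfolded comp_def]) (rule inj_on_subset[OF inj], auto)
  have MM: "M = (\<lambda>k. picks ! k) ` {..<L}" using sM unfolding L_def
    by (auto simp: in_set_conv_nth)
  have U: "(\<Sum>j\<in>M. u i j) = (\<Sum>m\<in>{..<L}. f m)"
    unfolding MM f_def by (rule sum.reindex[unfolded comp_def]) (rule inj)
  have "(\<Sum>m\<in>{r..<L}. f m) \<le> (\<Sum>m\<in>{..<L}. f m)"
    using nn by (intro sum_mono2) auto
  hence main: "real N * (\<Sum>j\<in>rr_bundle N picks i. u i j) \<le> (\<Sum>j\<in>M. u i j) + (real N - 1) * Mx"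
    unfolding S U using K by linarith
  have Npos: "real N > 0" using assms(1) by simp
  have "(\<Sum>j\<in>rr_bundle N picks i. u i j) \<le> ((\<Sum>j\<in>M. u i j) + (real N - 1) * Mx) / real N"
    using main Npos by (simp add: field_simps)
  also have "\<dots> = (1 / real N) * (\<Sum>j\<in>M. u i j) + (1 - 1 / real N) * Mx"
    using Npos by (simp add: field_simps)
  finally show ?thesis unfolding Mx_def .
qed

end
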